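(* Let $\nu$ be a probability measure on $\mathcal S$. Consider (i) for all disjoint $A,B\subset\mathcal S$ with $\nu[A]\le\frac12$ and $\nu[B]\ge\frac12$: $\nu[A]\le C_{\mathrm{var}}\,\mathrm{cap}(A,B)$; (ii) $\mathrm{Var}_\nu[f]\le C_{\mathrm{PI}}\,\mathcal E(f)$ for all $f\in\ell^2(\mu)$. If (i) holds with $C_{\mathrm{var}}$ then (ii) holds with $C_{\mathrm{PI}}=4C_{\mathrm{var}}$; if (ii) holds with $C_{\mathrm{PI}}$ then (i) holds with $C_{\mathrm{var}}=2C_{\mathrm{PI}}$. In particular the optimal constants satisfy $\frac12C_{\mathrm{var}}\le C_{\mathrm{PI}}\le4C_{\mathrm{var}}$.
   Context: $\mathcal S$ countable; irreducible positive recurrent Markov chain with transition probabilities $p(x,y)$, reversible w.r.t. its invariant probability measure $\mu$; $\mathcal E(f)=\frac12\sum_{x,y}\mu(x)p(x,y)(f(x)-f(y))^2$; $\tau_A=\inf\{t>0:X(t)\in A\}$; $\mathrm{cap}(A,B)=\sum_{x\in A}\mu(x)\mathbb P_x[\tau_B<\tau_A]=\inf\{\mathcal E(g):g|_A=1,g|_B=0\}$, $\mathrm{cap}(\emptyset,B)=0$. *)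

theory Defs
  imports "HOL-Analysis.Analysis"
begin

text \<open>Reversible, irreducible Markov chain on a countable state space, with
  transition probabilities p and invariant probability measure mu.
  (For an irreducible chain, existence of an invariant probability measure is
  equivalent to positive recurrence.)\<close>

definition stochastic_matrix :: "('a \<Rightarrow> 'a \<Rightarrow> real) \<Rightarrow> bool" where
  "stochastic_matrix p \<longleftrightarrow> (\<forall>x y. 0 \<le> p x y) \<and> (\<forall>x. (p x has_sum 1) UNIV)"

definition prob_fun :: "('a \<Rightarrow> real) \<Rightarrow> bool" where
  "prob_fun \<nu> \<longleftrightarrow> (\<forall>x. 0 \<le> \<nu> x) \<and> (\<nu> has_sum 1) UNIV"

definition irreducible_chain :: "('a \<Rightarrow> 'a \<Rightarrow> real) \<Rightarrow> bool" where
  "irreducible_chain p \<longleftrightarrow> (\<forall>x y. (x, y) \<in> {(u, v). 0 < p u v}\<^sup>*)"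

definition invariant_measure :: "('a \<Rightarrow> 'a \<Rightarrow> real) \<Rightarrow> ('a \<Rightarrow> real) \<Rightarrow> bool" where
  "invariant_measure p \<mu> \<longleftrightarrow> (\<forall>y. ((\<lambda>x. \<mu> x * p x y) has_sum \<mu> y) UNIV)"

definition reversible :: "('a \<Rightarrow> 'a \<Rightarrow> real) \<Rightarrow> ('a \<Rightarrow> real) \<Rightarrow> bool" where
  "reversible p \<mu> \<longleftrightarrow> (\<forall>x y. \<mu> x * p x y = \<mu> y * p y x)"

definition markov_setting :: "('a \<Rightarrow> 'a \<Rightarrow> real) \<Rightarrow> ('a \<Rightarrow> real) \<Rightarrow> bool" where
  "markov_setting p \<mu> \<longleftrightarrow> stochastic_matrix p \<and> irreducible_chain p \<and> prob_fun \<mu>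
     \<and> invariant_measure p \<mu> \<and> reversible p \<mu>"

definition meas :: "('a \<Rightarrow> real) \<Rightarrow> 'a set \<Rightarrow> real" where
  "meas \<nu> A = (\<Sum>\<^sub>\<infinity>x\<in>A. \<nu> x)"

definition dirichlet :: "('a \<Rightarrow> 'a \<Rightarrow> real) \<Rightarrow> ('a \<Rightarrow> real) \<Rightarrow> ('a \<Rightarrow> real) \<Rightarrow> ennreal" where
  "dirichlet p \<mu> f = (1/2) * (\<Sum>\<^sub>\<infinity>(x, y)\<in>UNIV. ennreal (\<mu> x * p x y * (f x - f y)\<^sup>2))"

text \<open>Capacity via the Dirichlet principle: inf { E(g) : g = 1 on A, g = 0 on B }.\<close>
definition cap :: "('a \<Rightarrow> 'a \<Rightarrow> real) \<Rightarrow> ('a \<Rightarrow> real) \<Rightarrow> 'a set \<Rightarrow> 'a set \<Rightarrow> ennreal" where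
  "cap p \<mu> A B = (INF g\<in>{g. (\<forall>x\<in>A. g x = 1) \<and> (\<forall>x\<in>B. g x = 0)}. dirichlet p \<mu> g)"

definition l2 :: "('a \<Rightarrow> real) \<Rightarrow> ('a \<Rightarrow> real) \<Rightarrow> bool" where
  "l2 \<mu> f \<longleftrightarrow> (\<lambda>x. \<mu> x * (f x)\<^sup>2) summable_on UNIV"

definition mean :: "('a \<Rightarrow> real) \<Rightarrow> ('a \<Rightarrow> real) \<Rightarrow> real" where
  "mean \<nu> f = (\<Sum>\<^sub>\<infinity>x. \<nu> x * f x)"

text \<open>Variance, valued in [0,\<infinity>]; it is \<infinity> whenever f is not in l2(nu)
  (if f is not nu-integrable the real infsum mean is 0 and the sum of nu f^2 diverges).\<close>
definition variance :: "('a \<Rightarrow> real) \<Rightarrow> ('a \<Rightarrow> real) \<Rightarrow> ennreal" where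
  "variance \<nu> f = (\<Sum>\<^sub>\<infinity>x\<in>UNIV. ennreal (\<nu> x * (f x - mean \<nu> f)\<^sup>2))"

definition var_cond :: "('a \<Rightarrow> 'a \<Rightarrow> real) \<Rightarrow> ('a \<Rightarrow> real) \<Rightarrow> ('a \<Rightarrow> real) \<Rightarrow> ennreal \<Rightarrow> bool" where
  "var_cond p \<mu> \<nu> C \<longleftrightarrow> (\<forall>A B. A \<inter> B = {} \<longrightarrow> meas \<nu> A \<le> 1/2 \<longrightarrow> meas \<nu> B \<ge> 1/2 \<longrightarrow>
      ennreal (meas \<nu> A) \<le> C * cap p \<mu> A B)"

definition PI_cond :: "('a \<Rightarrow> 'a \<Rightarrow> real) \<Rightarrow> ('a \<Rightarrow> real) \<Rightarrow> ('a \<Rightarrow> real) \<Rightarrow> ennreal \<Rightarrow> bool" where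
  "PI_cond p \<mu> \<nu> C \<longleftrightarrow> (\<forall>f. l2 \<mu> f \<longrightarrow> variance \<nu> f \<le> C * dirichlet p \<mu> f)"

end

theory Submission
  imports Defs
begin


lemma ennreal_infsum:
  fixes f :: "'a \<Rightarrow> real"
  assumes "f summable_on A" "\<And>x. x \<in> A \<Longrightarrow> 0 \<le> f x"
  shows "(\<Sum>\<^sub>\<infinity>x\<in>A. ennreal (f x)) = ennreal (\<Sum>\<^sub>\<infinity>x\<in>A. f x)"
proof -
  have "\<And>F. \<lbrakk>finite F; F \<subseteq> A\<rbrakk> \<Longrightarrow> sum (ennreal \<circ> f) F = ennreal (sum f F)"
    by (metis (mono_tags, lifting) comp_def assms(2) subsetD sum.cong sum_ennreal)
  then have "infsum (ennreal \<circ> f) A = ennreal (infsum f A)"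
    by (intro infsum_comm_additive_general) (auto simp: assms continuous_on_ennreal[THEN continuous_on_imp_continuous_within] 
        isCont_def intro: tendsto_ennrealI)
  then show ?thesis by (simp add: comp_def)
qed

lemma summable_of_ennreal_finite:
  fixes f :: "'a \<Rightarrow> real"
  assumes "(\<Sum>\<^sub>\<infinity>x\<in>A. ennreal (f x)) < \<infinity>" "\<And>x. x \<in> A \<Longrightarrow> 0 \<le> f x"
  shows "f summable_on A"
proof (rule nonneg_bdd_above_summable_on)
  show "\<And>x. x \<in> A \<Longrightarrow> 0 \<le> f x" by fact
  obtain r where r: "(\<Sum>\<^sub>\<infinity>x\<in>A. ennreal (f x)) = ennreal r" "r \<ge> 0"
    using assms(1) by (cases "(\<Sum>\<^sub>\<infinity>x\<in>A. ennreal (f x))") auto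
  show "bdd_above (sum f ` {F. F \<subseteq> A \<and> finite F})"
  proof (rule bdd_aboveI2)
    fix F assume F: "F \<in> {F. F \<subseteq> A \<and> finite F}"
    have "ennreal (sum f F) = (\<Sum>x\<in>F. ennreal (f x))"
      using F assms(2) by (subst sum_ennreal) auto
    also have "\<dots> \<le> (\<Sum>\<^sub>\<infinity>x\<in>A. ennreal (f x))"
      using F by (subst nonneg_infsum_complete) (auto intro: SUP_upper)
    finally show "sum f F \<le> r" using r
      by (metis ennreal_le_iff)
  qed
qed

lemma infsum_ennreal_nn_integral:
  fixes g :: "'a \<Rightarrow> ennreal"
  assumes "countable A"
  shows "infsum g A = (\<integral>\<^sup>+x. g x \<partial>count_space A)"
proof (cases "finite A")
  case True then show ?thesis by (simp add: nn_integral_count_space_finite)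
next
  case False
  note bij = bij_betw_from_nat_into[OF assms False]
  have "(\<integral>\<^sup>+x. g x \<partial>count_space A) = (\<integral>\<^sup>+n. g (from_nat_into A n) \<partial>count_space UNIV)"
    by (simp add: nn_integral_bij_count_space[symmetric, OF bij])
  also have "\<dots> = (\<Sum>n. g (from_nat_into A n))"
    by (rule nn_integral_count_space_nat)
  also have "\<dots> = infsum (\<lambda>n. g (from_nat_into A n)) UNIV"
  proof -
    have "((\<lambda>n. g (from_nat_into A n)) has_sum infsum (\<lambda>n. g (from_nat_into A n)) UNIV) UNIV"
      by (rule has_sum_infsum) (rule nonneg_summable_on_complete, simp)
    then have "(\<lambda>n. g (from_nat_into A n)) sums infsum (\<lambda>n. g (from_nat_into A n)) UNIV"
      by (rule has_sum_imp_sums)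
    then show ?thesis by (simp add: sums_iff)
  qed
  also have "\<dots> = infsum g A"
    using infsum_reindex[of "from_nat_into A" UNIV g] bij
    by (simp add: bij_betw_def comp_def)
  finally show ?thesis ..
qed



lemma infsum_ennreal_ge_term:
  fixes g :: "'a \<Rightarrow> ennreal"
  assumes "x \<in> A"
  shows "g x \<le> infsum g A"
proof -
  have "g x = sum g {x}" by simp
  also have "\<dots> \<le> Sup (sum g ` {F. finite F \<and> F \<subseteq> A})"
    by (rule SUP_upper) (use assms in auto)
  also have "\<dots> = infsum g A"
    by (subst nonneg_infsum_complete) auto
  finally show ?thesis .
qed

lemma ms_facts:
  assumes "markov_setting p \<mu>"
  shows "\<And>x y. 0 \<le> p x y" "\<And>x. 0 \<le> \<mu> x" "(\<mu> has_sum 1) UNIV"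
    "\<And>y. ((\<lambda>x. \<mu> x * p x y) has_sum \<mu> y) UNIV"
    "\<And>x y. \<mu> x * p x y = \<mu> y * p y x"
    "\<And>x y. (x, y) \<in> {(u, v). 0 < p u v}\<^sup>*"
  using assms unfolding markov_setting_def stochastic_matrix_def prob_fun_def invariant_measure_def
    reversible_def irreducible_chain_def by auto

lemma mu_pos:
  assumes "markov_setting p \<mu>"
  shows "0 < \<mu> y"
proof -
  note f = ms_facts[OF assms]
  have "\<exists>x0. 0 < \<mu> x0"
  proof (rule ccontr)
    assume "\<not> (\<exists>x0. 0 < \<mu> x0)"
    then have "\<forall>x. \<mu> x = 0" using f(2) by (metis antisym not_less)
    then have "\<mu> = (\<lambda>_. 0)" by auto
    then have "(\<mu> has_sum 0) UNIV" by (simp add: has_sum_0)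
    then show False using f(3) has_sum_unique by fastforce
  qed
  then obtain x0 where x0: "0 < \<mu> x0" by blast
  have "(x0, y) \<in> {(u, v). 0 < p u v}\<^sup>*" by (rule f(6))
  then show ?thesis
  proof (induction rule: rtrancl_induct)
    case base then show ?case using x0 .
  next
    case (step y z)
    have "\<mu> y * p y z \<le> \<mu> z"
    proof -
      have "(\<Sum>x\<in>{y}. \<mu> x * p x z) \<le> \<mu> z"
        by (rule has_sum_mono_neutral[OF has_sum_finite f(4)]) (auto intro: mult_nonneg_nonneg f)
      then show ?thesis by simp
    qed
    moreover have "0 < \<mu> y * p y z" using step by auto
    ultimately show ?case by linarith
  qed
qed

lemma sq_sum_le: "(u + v)\<^sup>2 \<le> 2 * u\<^sup>2 + 2 * (v::real)\<^sup>2"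
proof -
  have "0 \<le> (u - v)\<^sup>2" by simp
  then show ?thesis by (simp add: power2_diff power2_sum)
qed

lemma half_ennreal:
  assumes "0 \<le> a" shows "ennreal (a / 2) = (1/2) * ennreal a"
  using assms by (simp add: divide_ennreal[symmetric] divide_ennreal_def mult.commute)

lemma dirichlet_ge_edge:
  assumes "0 \<le> \<mu> x" "0 \<le> p x y"
  shows "ennreal (\<mu> x * p x y * (f x - f y)\<^sup>2 / 2) \<le> dirichlet p \<mu> f"
proof -
  have "ennreal (\<mu> x * p x y * (f x - f y)\<^sup>2 / 2) = (1/2) * ennreal (\<mu> x * p x y * (f x - f y)\<^sup>2)"
    by (rule half_ennreal) (use assms in simp)
  also have "\<dots> \<le> dirichlet p \<mu> f"
    unfolding dirichlet_def
    by (intro mult_left_mono infsum_ennreal_ge_term[where g="\<lambda>(x,y). ennreal (\<mu> x * p x y * (f x - f y)\<^sup>2)" and x="(x,y)", simplified]) auto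
  finally show ?thesis .
qed

lemma path_bound:
  assumes "markov_setting p \<mu>"
  shows "\<exists>c>0. \<forall>g. ennreal (c * (g x - g y)\<^sup>2) \<le> dirichlet p \<mu> g"
proof -
  note f = ms_facts[OF assms]
  have "(x, y) \<in> {(u, v). 0 < p u v}\<^sup>*" by (rule f(6))
  then show ?thesis
  proof (induction rule: rtrancl_induct)
    case base then show ?case by (intro exI[of _ 1]) auto
  next
    case (step y z)
    then obtain c where c: "c > 0" "\<And>g. ennreal (c * (g x - g y)\<^sup>2) \<le> dirichlet p \<mu> g" by auto
    define d where "d = \<mu> y * p y z / 2"
    have d: "d > 0" using step mu_pos[OF assms, of y] by (auto simp: d_def)
    have dd: "ennreal (d * (g y - g z)\<^sup>2) \<le> dirichlet p \<mu> g" for g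
      using dirichlet_ge_edge[of \<mu> y p z g] f(1,2) by (simp add: d_def)
    show ?case
    proof (intro exI[of _ "min c d / 4"] conjI allI)
      show "min c d / 4 > 0" using c d by simp
      fix g :: "'a \<Rightarrow> real"
      have "(g x - g z)\<^sup>2 \<le> 2 * (g x - g y)\<^sup>2 + 2 * (g y - g z)\<^sup>2"
        using sq_sum_le[of "g x - g y" "g y - g z"] by simp
      then have "min c d / 4 * (g x - g z)\<^sup>2 \<le> max (c * (g x - g y)\<^sup>2) (d * (g y - g z)\<^sup>2)"
      proof -
        assume h: "(g x - g z)\<^sup>2 \<le> 2 * (g x - g y)\<^sup>2 + 2 * (g y - g z)\<^sup>2"
        have m0: "0 \<le> min c d" using c d by simp
        have "min c d / 4 * (g x - g z)\<^sup>2 \<le> min c d / 4 * (2 * (g x - g y)\<^sup>2 + 2 * (g y - g z)\<^sup>2)"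
          using h m0 by (intro mult_left_mono) auto
        also have "\<dots> = (min c d * (g x - g y)\<^sup>2 + min c d * (g y - g z)\<^sup>2) / 2"
          by (simp add: algebra_simps)
        also have "\<dots> \<le> (c * (g x - g y)\<^sup>2 + d * (g y - g z)\<^sup>2) / 2"
          by (intro divide_right_mono add_mono mult_right_mono) auto
        also have "\<dots> \<le> max (c * (g x - g y)\<^sup>2) (d * (g y - g z)\<^sup>2)" by simp
        finally show ?thesis .
      qed
      then have "ennreal (min c d / 4 * (g x - g z)\<^sup>2) \<le> ennreal (max (c * (g x - g y)\<^sup>2) (d * (g y - g z)\<^sup>2))"
        by (rule ennreal_leI)
      also have "\<dots> \<le> dirichlet p \<mu> g"
        using c(2)[of g] dd[of g] by (simp add: max_def)
      finally show "ennreal (min c d / 4 * (g x - g z)\<^sup>2) \<le> dirichlet p \<mu> g" .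
    qed
  qed
qed



definition gt :: "real \<Rightarrow> real \<Rightarrow> real" where
  "gt t s = min 1 (s\<^sup>2 / t\<^sup>2)"

lemma poly_key:
  fixes a s :: real
  assumes "0 \<le> a" "a \<le> s"
  shows "(s\<^sup>2 - a\<^sup>2)\<^sup>2 \<le> 4/3 * (s - a) * (s^3 - a^3)"
proof -
  have e1: "(s\<^sup>2 - a\<^sup>2)\<^sup>2 = (s - a)\<^sup>2 * (s + a)\<^sup>2" by (simp add: power2_eq_square algebra_simps)
  have e2': "(s - a) * (s^3 - a^3) = (s - a)\<^sup>2 * (s\<^sup>2 + s*a + a\<^sup>2)"
    by (simp add: power2_eq_square power3_eq_cube algebra_simps)
  have e2: "4/3 * (s - a) * (s^3 - a^3) = (s - a)\<^sup>2 * (4/3 * (s\<^sup>2 + s*a + a\<^sup>2))"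
    using e2' by (simp add: algebra_simps)
  have "(s + a)\<^sup>2 \<le> 4/3 * (s\<^sup>2 + s*a + a\<^sup>2)"
  proof -
    have "0 \<le> (s - a)\<^sup>2" by simp
    moreover have "(s+a)\<^sup>2 = s\<^sup>2 + 2*(s*a) + a\<^sup>2" by (simp add: power2_eq_square algebra_simps)
    moreover have "(s-a)\<^sup>2 = s\<^sup>2 - 2*(s*a) + a\<^sup>2" by (simp add: power2_eq_square algebra_simps)
    moreover have "4/3 * (s\<^sup>2 + s*a + a\<^sup>2) = 4/3 * s\<^sup>2 + 4/3*(s*a) + 4/3*a\<^sup>2" by (simp add: algebra_simps)
    ultimately show ?thesis by linarith
  qed
  then have "(s - a)\<^sup>2 * (s + a)\<^sup>2 \<le> (s - a)\<^sup>2 * (4/3 * (s\<^sup>2 + s*a + a\<^sup>2))"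
    by (intro mult_left_mono) auto
  then show ?thesis using e1 e2 by simp
qed

lemma pointwise_edge:
  fixes a b t :: real
  assumes "0 \<le> a" "a \<le> b" "0 < t"
  shows "2 * t * (gt t b - gt t a)\<^sup>2 \<le> 4/3 * (b - a) * (2 * ((min t b)^3 - (min t a)^3) / t^3)"
proof -
  have t2: "t\<^sup>2 > 0" using assms by simp
  consider "t \<le> a" | "a \<le> t" "t \<le> b" | "b \<le> t" by linarith
  then show ?thesis
  proof cases
    case 1
    then have "a\<^sup>2 / t\<^sup>2 \<ge> 1" "b\<^sup>2 / t\<^sup>2 \<ge> 1" using assms t2
      by (auto simp: field_simps intro!: power_mono)
    then show ?thesis using 1 assms by (simp add: gt_def min_def)
  next
    case 2
    have ga: "gt t a = a\<^sup>2 / t\<^sup>2" using 2 assms t2 by (auto simp: gt_def field_simps intro!: power_mono)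
    have gb: "gt t b = 1" using 2 assms t2 by (auto simp: gt_def field_simps intro!: power_mono)
    have "2 * t * (gt t b - gt t a)\<^sup>2 = 2 * (t\<^sup>2 - a\<^sup>2)\<^sup>2 / t^3"
      using assms by (simp add: ga gb field_simps power2_eq_square power3_eq_cube)
    also have "\<dots> \<le> 2 * (4/3 * (t - a) * (t^3 - a^3)) / t^3"
      using poly_key[of a t] 2 assms by (intro divide_right_mono mult_left_mono) auto
    also have "\<dots> \<le> 2 * (4/3 * (b - a) * (t^3 - a^3)) / t^3"
    proof -
      have "a^3 \<le> t^3" using 2 assms by (intro power_mono) auto
      then show ?thesis using 2 assms
        by (intro divide_right_mono mult_left_mono mult_right_mono) auto
    qed
    also have "\<dots> = 4/3 * (b - a) * (2 * ((min t b)^3 - (min t a)^3) / t^3)"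
      using 2 by (simp add: min_def)
    finally show ?thesis .
  next
    case 3
    have ga: "gt t a = a\<^sup>2 / t\<^sup>2" using 3 assms t2 by (auto simp: gt_def field_simps intro!: power_mono)
    have gb: "gt t b = b\<^sup>2 / t\<^sup>2" using 3 assms t2 by (auto simp: gt_def field_simps intro!: power_mono)
    have "2 * t * (gt t b - gt t a)\<^sup>2 = 2 * (b\<^sup>2 - a\<^sup>2)\<^sup>2 / t^3"
      using assms by (simp add: ga gb field_simps power2_eq_square power3_eq_cube)
    also have "\<dots> \<le> 2 * (4/3 * (b - a) * (b^3 - a^3)) / t^3"
      using poly_key[of a b] 3 assms by (intro divide_right_mono mult_left_mono) auto
    also have "\<dots> = 4/3 * (b - a) * (2 * ((min t b)^3 - (min t a)^3) / t^3)"
      using 3 assms by (simp add: min_def)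
    finally show ?thesis .
  qed
qed


lemma q_integral:
  fixes a b :: real
  assumes "0 \<le> a" "a \<le> b" "0 < b"
  shows "(\<integral>\<^sup>+t. ennreal (2 * ((min t b)^3 - (min t a)^3) / t^3) * indicator {0<..} t \<partial>lborel)
           \<le> ennreal (3 * (b - a))"
proof -
  define q1 where "q1 t = 2 - 2 * a^3 / t^3" for t :: real
  define q2 where "q2 t = 2 * (b^3 - a^3) / t^3" for t :: real
  have ab3: "a^3 \<le> b^3" using assms by (intro power_mono) auto
  have pt: "ennreal (2 * ((min t b)^3 - (min t a)^3) / t^3) * indicator {0<..} t
      \<le> ennreal (q1 t) * indicator {a..b} t + ennreal (q2 t) * indicator {b..} t" for t
  proof (cases "t > 0")
    case False then show ?thesis by simp
  next
    case True
    consider "t < a" | "a \<le> t" "t \<le> b" | "b < t" by linarith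
    then show ?thesis
    proof cases
      case 1 then show ?thesis using True assms by (simp add: min_def)
    next
      case 2
      have "2 * ((min t b)^3 - (min t a)^3) / t^3 = q1 t"
        using 2 True by (simp add: min_def q1_def field_simps)
      then show ?thesis using 2 True by (simp add: indicator_def)
    next
      case 3
      have "2 * ((min t b)^3 - (min t a)^3) / t^3 = q2 t"
        using 3 assms True by (simp add: min_def q2_def)
      then show ?thesis using 3 True by (simp add: indicator_def)
    qed
  qed
  have I1: "(\<integral>\<^sup>+t. ennreal (q1 t) * indicator {a..b} t \<partial>lborel) = ennreal (2*b - 3*a + a^3 / b\<^sup>2)"
  proof (cases "a = 0")
    case True
    have "(\<integral>\<^sup>+t. ennreal (q1 t) * indicator {a..b} t \<partial>lborel) = ennreal ((\<lambda>t. 2 * t) b - (\<lambda>t. 2 * t) a)"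
      by (rule nn_integral_FTC_Icc) (use assms in \<open>auto simp: q1_def True intro!: derivative_eq_intros\<close>)
    then show ?thesis using True by simp
  next
    case False
    then have a0: "a > 0" using assms by simp
    have "(\<integral>\<^sup>+t. ennreal (q1 t) * indicator {a..b} t \<partial>lborel)
        = ennreal ((\<lambda>t. 2 * t + a^3 / t\<^sup>2) b - (\<lambda>t. 2 * t + a^3 / t\<^sup>2) a)"
    proof (rule nn_integral_FTC_Icc)
      show "q1 \<in> borel_measurable borel" unfolding q1_def by measurable
      show "a \<le> b" by fact
      fix x assume x: "x \<in> {a..b}"
      then have x0: "x > 0" using a0 by simp
      show "((\<lambda>t. 2 * t + a^3 / t\<^sup>2) has_real_derivative q1 x) (at x)"
        using x0 by (auto intro!: derivative_eq_intros simp: q1_def field_simps power2_eq_square power3_eq_cube)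
      have "a^3 \<le> x^3" using x a0 by (intro power_mono) auto
      then show "0 \<le> q1 x" using x0 by (simp add: q1_def field_simps)
    qed
    also have "\<dots> = 2*b - 3*a + a^3 / b\<^sup>2"
      using a0 by (simp add: field_simps power2_eq_square power3_eq_cube)
    finally show ?thesis by simp
  qed
  have I2: "(\<integral>\<^sup>+t. ennreal (q2 t) * indicator {b..} t \<partial>lborel) = ennreal ((b^3 - a^3) / b\<^sup>2)"
  proof -
    have "(\<integral>\<^sup>+t. ennreal (q2 t) * indicator {b..} t \<partial>lborel) = ennreal (0 - (\<lambda>t. - (b^3 - a^3) / t\<^sup>2) b)"
    proof (rule nn_integral_FTC_atLeast[where F="\<lambda>t. - (b^3 - a^3) / t\<^sup>2" and T=0])
      show "q2 \<in> borel_measurable borel" unfolding q2_def by measurable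
      fix x assume x: "b \<le> x"
      then have x0: "x > 0" using assms by simp
      show "((\<lambda>t. - (b^3 - a^3) / t\<^sup>2) has_real_derivative q2 x) (at x)"
        using x0 by (auto intro!: derivative_eq_intros simp: q2_def field_simps power2_eq_square power3_eq_cube)
      show "0 \<le> q2 x" using x0 ab3 by (simp add: q2_def)
    next
      show "((\<lambda>t. - (b^3 - a^3) / t\<^sup>2) \<longlongrightarrow> 0) at_top"
      proof -
        have "filterlim (\<lambda>t::real. t^2) at_top at_top"
          by (intro filterlim_pow_at_top filterlim_ident) auto
        then have "((\<lambda>t::real. inverse (t^2)) \<longlongrightarrow> 0) at_top" by (rule tendsto_inverse_0_at_top)
        then have "((\<lambda>t::real. - (b^3 - a^3) * inverse (t^2)) \<longlongrightarrow> - (b^3 - a^3) * 0) at_top"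
          by (intro tendsto_mult tendsto_const)
        then show ?thesis by (simp add: divide_inverse)
      qed
    qed
    moreover have "0 - (- (b^3 - a^3) / b\<^sup>2) = (b^3 - a^3) / b\<^sup>2" by (simp add: minus_divide_left)
    ultimately show ?thesis by metis
  qed
  have "(\<integral>\<^sup>+t. ennreal (2 * ((min t b)^3 - (min t a)^3) / t^3) * indicator {0<..} t \<partial>lborel)
      \<le> (\<integral>\<^sup>+t. ennreal (q1 t) * indicator {a..b} t + ennreal (q2 t) * indicator {b..} t \<partial>lborel)"
    by (intro nn_integral_mono pt)
  also have "\<dots> = (\<integral>\<^sup>+t. ennreal (q1 t) * indicator {a..b} t \<partial>lborel) + (\<integral>\<^sup>+t. ennreal (q2 t) * indicator {b..} t \<partial>lborel)"
    by (rule nn_integral_add) (auto simp: q1_def q2_def)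
  also have "\<dots> = ennreal (2*b - 3*a + a^3 / b\<^sup>2) + ennreal ((b^3 - a^3) / b\<^sup>2)"
    using I1 I2 by simp
  also have "\<dots> = ennreal (3 * (b - a))"
  proof -
    have g0: "0 \<le> 2*b - 3*a + a^3 / b\<^sup>2"
    proof -
      have "(b - a)^2 * (2*b + a) \<ge> 0"
        using assms by (intro mult_nonneg_nonneg) auto
      then have "2*b^3 - 3*a*b^2 + a^3 \<ge> 0" by (simp add: power2_eq_square power3_eq_cube algebra_simps)
      then show ?thesis using assms by (simp add: field_simps power2_eq_square power3_eq_cube)
    qed
    have "0 \<le> (b^3 - a^3) / b\<^sup>2" using ab3 by simp
    then have "ennreal (2*b - 3*a + a^3 / b\<^sup>2) + ennreal ((b^3 - a^3) / b\<^sup>2)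
        = ennreal (2*b - 3*a + a^3 / b\<^sup>2 + (b^3 - a^3) / b\<^sup>2)"
      using g0 by (simp add: ennreal_plus)
    also have "2*b - 3*a + a^3 / b\<^sup>2 + (b^3 - a^3) / b\<^sup>2 = 3 * (b - a)"
      using assms by (simp add: field_simps power2_eq_square power3_eq_cube)
    finally show ?thesis .
  qed
  finally show ?thesis .
qed



lemma edge_integral_le:
  fixes a b :: real
  assumes "0 \<le> a" "a \<le> b"
  shows "(\<integral>\<^sup>+t. ennreal (2*t*(gt t b - gt t a)\<^sup>2) \<partial>lborel) \<le> ennreal (4*(b-a)\<^sup>2)"
proof (cases "b = 0")
  case True
  then have "a = 0" using assms by simp
  then show ?thesis using True by simp
next
  case False
  then have b0: "0 < b" using assms by simp
  define c where "c = 4/3*(b-a)"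
  have c0: "0 \<le> c" using assms by (simp add: c_def)
  have pt: "ennreal (2*t*(gt t b - gt t a)\<^sup>2)
      \<le> ennreal c * (ennreal (2 * ((min t b)^3 - (min t a)^3) / t^3) * indicator {0<..} t)" for t
  proof (cases "t > 0")
    case False
    then have "2*t \<le> 0" by simp
    then have "2*t*(gt t b - gt t a)\<^sup>2 \<le> 0"
      by (rule mult_nonpos_nonneg) simp
    then have "ennreal (2*t*(gt t b - gt t a)\<^sup>2) = 0" by (rule ennreal_neg)
    then show ?thesis by simp
  next
    case True
    have mm: "(min t a)^3 \<le> (min t b)^3" using assms True by (intro power_mono) auto
    have "ennreal (2*t*(gt t b - gt t a)\<^sup>2) \<le> ennreal (c * (2 * ((min t b)^3 - (min t a)^3) / t^3))"
      using pointwise_edge[OF assms True] by (intro ennreal_leI) (simp add: c_def)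
    also have "\<dots> = ennreal c * ennreal (2 * ((min t b)^3 - (min t a)^3) / t^3)"
      using c0 mm True by (intro ennreal_mult) auto
    finally show ?thesis using True by simp
  qed
  have "(\<integral>\<^sup>+t. ennreal (2*t*(gt t b - gt t a)\<^sup>2) \<partial>lborel)
      \<le> (\<integral>\<^sup>+t. ennreal c * (ennreal (2 * ((min t b)^3 - (min t a)^3) / t^3) * indicator {0<..} t) \<partial>lborel)"
    by (intro nn_integral_mono pt)
  also have "\<dots> = ennreal c * (\<integral>\<^sup>+t. ennreal (2 * ((min t b)^3 - (min t a)^3) / t^3) * indicator {0<..} t \<partial>lborel)"
    by (rule nn_integral_cmult) measurable
  also have "\<dots> \<le> ennreal c * ennreal (3 * (b - a))"
    by (intro mult_left_mono q_integral assms b0) auto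
  also have "\<dots> = ennreal (4*(b-a)\<^sup>2)"
  proof -
    have e: "c * (3 * (b - a)) = 4*(b-a)\<^sup>2" by (simp add: c_def power2_eq_square field_simps)
    have "ennreal c * ennreal (3 * (b - a)) = ennreal (c * (3 * (b - a)))"
      using c0 assms by (intro ennreal_mult[symmetric]) auto
    then show ?thesis using e by simp
  qed
  finally show ?thesis .
qed

lemma edge_integral:
  fixes a b :: real
  assumes "0 \<le> a" "0 \<le> b"
  shows "(\<integral>\<^sup>+t. ennreal (2*t*(gt t a - gt t b)\<^sup>2) \<partial>lborel) \<le> ennreal (4*(a-b)\<^sup>2)"
proof (cases "a \<le> b")
  case True
  then show ?thesis using edge_integral_le[OF assms(1) True] by (simp add: power2_commute)
next
  case False
  then show ?thesis using edge_integral_le[OF assms(2), of a] by simp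
qed

lemma layer_cake:
  fixes c :: real
  assumes "0 \<le> c"
  shows "(\<integral>\<^sup>+t. ennreal (2*t) * indicator {..c} t \<partial>lborel) = ennreal (c\<^sup>2)"
proof -
  have "(\<integral>\<^sup>+t. ennreal (2*t) * indicator {..c} t \<partial>lborel) = (\<integral>\<^sup>+t. ennreal (2*t) * indicator {0..c} t \<partial>lborel)"
    by (intro nn_integral_cong) (auto simp: indicator_def ennreal_eq_0_iff)
  also have "\<dots> = ennreal ((\<lambda>t. t\<^sup>2) c - (\<lambda>t. t\<^sup>2) 0)"
    by (rule nn_integral_FTC_Icc[where F="\<lambda>t. t\<^sup>2"]) (auto intro!: derivative_eq_intros assms)
  finally show ?thesis by simp
qed

lemma infsum_cmult_ennreal:
  fixes g :: "'a \<Rightarrow> ennreal"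
  assumes "countable A"
  shows "(\<Sum>\<^sub>\<infinity>x\<in>A. c * g x) = c * (\<Sum>\<^sub>\<infinity>x\<in>A. g x)"
  using assms by (simp add: infsum_ennreal_nn_integral nn_integral_cmult)

lemma tonelli_infsum:
  fixes f :: "'i \<Rightarrow> real \<Rightarrow> ennreal"
  assumes "countable I" "\<And>i. i \<in> I \<Longrightarrow> f i \<in> borel_measurable lborel"
  shows "(\<integral>\<^sup>+t. (\<Sum>\<^sub>\<infinity>i\<in>I. f i t) \<partial>lborel) = (\<Sum>\<^sub>\<infinity>i\<in>I. \<integral>\<^sup>+t. f i t \<partial>lborel)"
  using nn_integral_count_space_nn_integral[OF assms] assms(1)
  by (simp add: infsum_ennreal_nn_integral)



lemma nu_facts:
  assumes "prob_fun \<nu>"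
  shows "\<And>x. 0 \<le> \<nu> x" "(\<nu> has_sum 1) UNIV" "\<And>A. \<nu> summable_on A"
proof -
  show "\<And>x. 0 \<le> \<nu> x" "(\<nu> has_sum 1) UNIV" using assms by (auto simp: prob_fun_def)
  then have "\<nu> summable_on UNIV" by (auto simp: summable_on_def)
  then show "\<And>A. \<nu> summable_on A" by (rule summable_on_subset_banach) simp
qed

lemma ennreal_meas:
  assumes "prob_fun \<nu>"
  shows "(\<Sum>\<^sub>\<infinity>x\<in>A. ennreal (\<nu> x)) = ennreal (meas \<nu> A)"
  unfolding meas_def using nu_facts[OF assms] by (intro ennreal_infsum) auto

lemma core:
  fixes p :: "'a::countable \<Rightarrow> 'a \<Rightarrow> real" and \<mu> \<nu> \<phi> :: "'a \<Rightarrow> real"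
  assumes ms: "markov_setting p \<mu>" and nu: "prob_fun \<nu>" and vc: "var_cond p \<mu> \<nu> C"
    and phi0: "\<And>x. 0 \<le> \<phi> x"
    and hB: "meas \<nu> {x. \<phi> x = 0} \<ge> 1/2"
    and hA: "\<And>t. t > 0 \<Longrightarrow> meas \<nu> {x. t \<le> \<phi> x} \<le> 1/2"
  shows "(\<Sum>\<^sub>\<infinity>x. ennreal (\<nu> x * (\<phi> x)\<^sup>2)) \<le> 4 * C * dirichlet p \<mu> \<phi>"
proof -
  note f = ms_facts[OF ms]
  note nf = nu_facts[OF nu]
  define h where "h x t = ennreal (\<nu> x) * (ennreal (2*t) * indicator {..\<phi> x} t)" for x t
  have hm: "h x \<in> borel_measurable lborel" for x unfolding h_def by measurable
  have step1: "ennreal (\<nu> x * (\<phi> x)\<^sup>2) = (\<integral>\<^sup>+t. h x t \<partial>lborel)" for x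
  proof -
    have "ennreal (\<nu> x * (\<phi> x)\<^sup>2) = ennreal (\<nu> x) * ennreal ((\<phi> x)\<^sup>2)"
      using nf(1) by (simp add: ennreal_mult)
    also have "\<dots> = ennreal (\<nu> x) * (\<integral>\<^sup>+t. ennreal (2*t) * indicator {..\<phi> x} t \<partial>lborel)"
      using layer_cake[OF phi0[of x]] by simp
    also have "\<dots> = (\<integral>\<^sup>+t. h x t \<partial>lborel)"
      unfolding h_def by (rule nn_integral_cmult[symmetric]) measurable
    finally show ?thesis .
  qed
  define E where "E t = dirichlet p \<mu> (\<lambda>x. gt t (\<phi> x))" for t
  have step2: "(\<Sum>\<^sub>\<infinity>x. h x t) \<le> ennreal (2*t) * (C * E t)" for t
  proof (cases "t > 0")
    case False
    then have "ennreal (2*t) = 0" by (intro ennreal_neg) simp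
    then show ?thesis by (simp add: h_def)
  next
    case True
    define A where "A = {x. t \<le> \<phi> x}"
    define B where "B = {x. \<phi> x = 0}"
    have "(\<Sum>\<^sub>\<infinity>x. h x t) = (\<Sum>\<^sub>\<infinity>x. ennreal (2*t) * (ennreal (\<nu> x) * indicator {..\<phi> x} t))"
      unfolding h_def by (simp add: ac_simps)
    also have "\<dots> = ennreal (2*t) * (\<Sum>\<^sub>\<infinity>x. ennreal (\<nu> x) * indicator {..\<phi> x} t)"
      by (rule infsum_cmult_ennreal) simp
    also have "(\<Sum>\<^sub>\<infinity>x. ennreal (\<nu> x) * indicator {..\<phi> x} t) = (\<Sum>\<^sub>\<infinity>x\<in>A. ennreal (\<nu> x))"
      by (rule infsum_cong_neutral) (auto simp: A_def indicator_def)
    also have "\<dots> = ennreal (meas \<nu> A)" by (rule ennreal_meas[OF nu])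
    also have "ennreal (meas \<nu> A) \<le> C * cap p \<mu> A B"
    proof -
      have "A \<inter> B = {}" using True by (auto simp: A_def B_def)
      moreover have "meas \<nu> A \<le> 1/2" using hA[OF True] by (simp add: A_def)
      moreover have "meas \<nu> B \<ge> 1/2" using hB by (simp add: B_def)
      ultimately show ?thesis using vc unfolding var_cond_def by blast
    qed
    also have "cap p \<mu> A B \<le> E t"
      unfolding cap_def E_def
    proof (rule INF_lower)
      have "gt t (\<phi> x) = 1" if "x \<in> A" for x
      proof -
        have "t\<^sup>2 \<le> (\<phi> x)\<^sup>2" using that True by (intro power_mono) (auto simp: A_def)
        then show ?thesis using True by (simp add: gt_def)
      qed
      moreover have "gt t (\<phi> x) = 0" if "x \<in> B" for x using that by (simp add: gt_def B_def)
      ultimately show "(\<lambda>x. gt t (\<phi> x)) \<in> {g. (\<forall>x\<in>A. g x = 1) \<and> (\<forall>x\<in>B. g x = 0)}" by auto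
    qed
    finally show ?thesis by (simp add: mult_left_mono)
  qed
  define k where "k e t = C * (1/2) * (ennreal (\<mu> (fst e) * p (fst e) (snd e))
      * ennreal (2*t*(gt t (\<phi> (fst e)) - gt t (\<phi> (snd e)))\<^sup>2))" for e :: "'a \<times> 'a" and t
  have km: "k e \<in> borel_measurable lborel" for e unfolding k_def gt_def by measurable
  have step3: "ennreal (2*t) * (C * E t) = (\<Sum>\<^sub>\<infinity>e. k e t)" for t
  proof -
    have eq: "ennreal (2*t) * ennreal (\<mu> (fst e) * p (fst e) (snd e) * (gt t (\<phi> (fst e)) - gt t (\<phi> (snd e)))\<^sup>2)
        = ennreal (\<mu> (fst e) * p (fst e) (snd e)) * ennreal (2*t*(gt t (\<phi> (fst e)) - gt t (\<phi> (snd e)))\<^sup>2)" for e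
    proof (cases "t > 0")
      case False
      then have "2*t \<le> 0" by simp
      then have "2*t*(gt t (\<phi> (fst e)) - gt t (\<phi> (snd e)))\<^sup>2 \<le> 0" by (rule mult_nonpos_nonneg) simp
      then show ?thesis using False by (simp add: ennreal_neg)
    next
      case True
      have "0 \<le> \<mu> (fst e) * p (fst e) (snd e)" using f(1,2) by simp
      then show ?thesis using True
        by (simp add: ennreal_mult'[symmetric] ennreal_mult[symmetric] algebra_simps)
    qed
    have "E t = (1/2) * (\<Sum>\<^sub>\<infinity>e. ennreal (\<mu> (fst e) * p (fst e) (snd e) * (gt t (\<phi> (fst e)) - gt t (\<phi> (snd e)))\<^sup>2))"
      unfolding E_def dirichlet_def by (simp add: case_prod_beta')
    then have "ennreal (2*t) * (C * E t) = C * (1/2) * (\<Sum>\<^sub>\<infinity>e. ennreal (2*t) * ennreal (\<mu> (fst e) * p (fst e) (snd e) * (gt t (\<phi> (fst e)) - gt t (\<phi> (snd e)))\<^sup>2))"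
      by (simp add: infsum_cmult_ennreal ac_simps)
    also have "\<dots> = (\<Sum>\<^sub>\<infinity>e. k e t)"
      unfolding k_def eq by (simp add: infsum_cmult_ennreal)
    finally show ?thesis .
  qed
  have step4: "(\<integral>\<^sup>+t. k e t \<partial>lborel) \<le> 4 * C * ((1/2) * ennreal (\<mu> (fst e) * p (fst e) (snd e) * (\<phi> (fst e) - \<phi> (snd e))\<^sup>2))" for e
  proof -
    have m0: "0 \<le> \<mu> (fst e) * p (fst e) (snd e)" using f(1,2) by simp
    have "(\<integral>\<^sup>+t. k e t \<partial>lborel) = C * (1/2) * ennreal (\<mu> (fst e) * p (fst e) (snd e))
        * (\<integral>\<^sup>+t. ennreal (2*t*(gt t (\<phi> (fst e)) - gt t (\<phi> (snd e)))\<^sup>2) \<partial>lborel)"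
      unfolding k_def by (subst nn_integral_cmult[symmetric]) (auto simp: gt_def ac_simps)
    also have "\<dots> \<le> C * (1/2) * ennreal (\<mu> (fst e) * p (fst e) (snd e)) * ennreal (4 * (\<phi> (fst e) - \<phi> (snd e))\<^sup>2)"
      by (intro mult_left_mono edge_integral phi0) auto
    also have "\<dots> = 4 * C * ((1/2) * ennreal (\<mu> (fst e) * p (fst e) (snd e) * (\<phi> (fst e) - \<phi> (snd e))\<^sup>2))"
    proof -
      have m1: "ennreal (\<mu> (fst e) * p (fst e) (snd e) * (\<phi> (fst e) - \<phi> (snd e))\<^sup>2)
         = ennreal (\<mu> (fst e) * p (fst e) (snd e)) * ennreal ((\<phi> (fst e) - \<phi> (snd e))\<^sup>2)"
        using m0 by (rule ennreal_mult) simp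
      have m2: "ennreal (4 * (\<phi> (fst e) - \<phi> (snd e))\<^sup>2) = 4 * ennreal ((\<phi> (fst e) - \<phi> (snd e))\<^sup>2)"
        by (simp add: ennreal_mult)
      show ?thesis unfolding m1 m2 by (simp add: ac_simps)
    qed
    finally show ?thesis .
  qed
  have "(\<Sum>\<^sub>\<infinity>x. ennreal (\<nu> x * (\<phi> x)\<^sup>2)) = (\<Sum>\<^sub>\<infinity>x. \<integral>\<^sup>+t. h x t \<partial>lborel)"
    using step1 by simp
  also have "\<dots> = (\<integral>\<^sup>+t. (\<Sum>\<^sub>\<infinity>x. h x t) \<partial>lborel)"
    by (rule tonelli_infsum[symmetric]) (use hm in auto)
  also have "\<dots> \<le> (\<integral>\<^sup>+t. (\<Sum>\<^sub>\<infinity>e. k e t) \<partial>lborel)"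
    using step2 step3 by (intro nn_integral_mono) auto
  also have "\<dots> = (\<Sum>\<^sub>\<infinity>e. \<integral>\<^sup>+t. k e t \<partial>lborel)"
    by (rule tonelli_infsum) (use km in auto)
  also have "\<dots> \<le> (\<Sum>\<^sub>\<infinity>e. 4 * C * ((1/2) * ennreal (\<mu> (fst e) * p (fst e) (snd e) * (\<phi> (fst e) - \<phi> (snd e))\<^sup>2)))"
    by (intro infsum_mono step4 nonneg_summable_on_complete) auto
  also have "\<dots> = 4 * C * dirichlet p \<mu> \<phi>"
    unfolding dirichlet_def by (simp add: infsum_cmult_ennreal case_prod_beta')
  finally show ?thesis .
qed



definition Nm :: "('a::countable \<Rightarrow> real) \<Rightarrow> 'a measure" where
  "Nm \<nu> = density (count_space UNIV) (\<lambda>x. ennreal (\<nu> x))"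

lemma emeasure_Nm:
  fixes \<nu> :: "'a::countable \<Rightarrow> real"
  assumes "prob_fun \<nu>"
  shows "emeasure (Nm \<nu>) A = ennreal (meas \<nu> A)"
proof -
  have "emeasure (Nm \<nu>) A = (\<integral>\<^sup>+x. ennreal (\<nu> x) * indicator A x \<partial>count_space UNIV)"
    unfolding Nm_def by (subst emeasure_density) auto
  also have "\<dots> = (\<Sum>\<^sub>\<infinity>x. ennreal (\<nu> x) * indicator A x)"
    by (rule infsum_ennreal_nn_integral[symmetric]) simp
  also have "\<dots> = (\<Sum>\<^sub>\<infinity>x\<in>A. ennreal (\<nu> x))"
    by (rule infsum_cong_neutral) (auto simp: indicator_def)
  also have "\<dots> = ennreal (meas \<nu> A)" by (rule ennreal_meas[OF assms])
  finally show ?thesis .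
qed

lemma meas_nonneg: assumes "prob_fun \<nu>" shows "0 \<le> meas \<nu> A"
  unfolding meas_def using nu_facts(1)[OF assms] by (intro infsum_nonneg) auto

lemma meas_UNIV: "prob_fun \<nu> \<Longrightarrow> meas \<nu> UNIV = 1"
  unfolding meas_def using nu_facts(2) by (rule infsumI)

lemma prob_Nm:
  fixes \<nu> :: "'a::countable \<Rightarrow> real"
  assumes "prob_fun \<nu>"
  shows "finite_measure (Nm \<nu>)"
proof (rule finite_measureI)
  show "emeasure (Nm \<nu>) (space (Nm \<nu>)) \<noteq> \<infinity>"
    using emeasure_Nm[OF assms] meas_UNIV[OF assms] by (simp add: Nm_def)
qed

lemma measure_Nm:
  fixes \<nu> :: "'a::countable \<Rightarrow> real"
  assumes "prob_fun \<nu>"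
  shows "measure (Nm \<nu>) A = meas \<nu> A"
  unfolding measure_def using emeasure_Nm[OF assms] meas_nonneg[OF assms] by simp

lemma sets_Nm[simp]: "sets (Nm \<nu>) = UNIV" and space_Nm[simp]: "space (Nm \<nu>) = UNIV"
  by (simp_all add: Nm_def)

lemma median_exists:
  fixes \<nu> f :: "'a::countable \<Rightarrow> real"
  assumes nu: "prob_fun \<nu>"
  shows "\<exists>m. meas \<nu> {x. f x \<le> m} \<ge> 1/2 \<and> meas \<nu> {x. m \<le> f x} \<ge> 1/2
     \<and> (\<forall>t>0. meas \<nu> {x. m + t \<le> f x} \<le> 1/2) \<and> (\<forall>t>0. meas \<nu> {x. f x \<le> m - t} \<le> 1/2)"
proof -
  interpret N: finite_measure "Nm \<nu>" by (rule prob_Nm[OF nu])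
  note mN = measure_Nm[OF nu, symmetric]
  have m1: "measure (Nm \<nu>) UNIV = 1" using meas_UNIV[OF nu] by (simp add: mN)
  define S where "S = {t. 1/2 \<le> meas \<nu> {x. t \<le> f x}}"
  have mono: "meas \<nu> {x. t \<le> f x} \<le> meas \<nu> {x. s \<le> f x}" if "s \<le> t" for s t
    unfolding mN using that by (intro N.finite_measure_mono) auto
  have "(\<lambda>n. measure (Nm \<nu>) {x. - real n \<le> f x}) \<longlonglongrightarrow> measure (Nm \<nu>) (\<Union>n. {x. - real n \<le> f x})"
    by (intro N.finite_Lim_measure_incseq) (auto simp: incseq_def)
  moreover have "(\<Union>n. {x. - real n \<le> f x}) = UNIV"
  proof -
    have "\<exists>n. - real n \<le> f x" for x
    proof -
      obtain n where "- f x < real n" using reals_Archimedean2[of "- f x"] by blast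
      then have "- real n \<le> f x" by simp
      then show ?thesis by blast
    qed
    then show ?thesis by auto
  qed
  ultimately have "(\<lambda>n. measure (Nm \<nu>) {x. - real n \<le> f x}) \<longlonglongrightarrow> 1" using m1 by simp
  then have "\<forall>\<^sub>F n in sequentially. 1/2 < measure (Nm \<nu>) {x. - real n \<le> f x}"
    by (rule order_tendstoD) simp
  then obtain n1 where "1/2 < measure (Nm \<nu>) {x. - real n1 \<le> f x}"
    by (auto simp: eventually_sequentially)
  then have Sne: "- real n1 \<in> S" by (simp add: S_def mN)
  have "(\<lambda>n. measure (Nm \<nu>) {x. real n \<le> f x}) \<longlonglongrightarrow> measure (Nm \<nu>) (\<Inter>n. {x. real n \<le> f x})"
    by (intro N.finite_Lim_measure_decseq) (auto simp: decseq_def)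
  moreover have "(\<Inter>n. {x. real n \<le> f x}) = {}"
  proof -
    have "\<exists>n. \<not> real n \<le> f x" for x
      using reals_Archimedean2[of "f x"] not_le by blast
    then show ?thesis by auto
  qed
  ultimately have "(\<lambda>n. measure (Nm \<nu>) {x. real n \<le> f x}) \<longlonglongrightarrow> 0" by simp
  then have "\<forall>\<^sub>F n in sequentially. measure (Nm \<nu>) {x. real n \<le> f x} < 1/2"
    by (rule order_tendstoD) simp
  then obtain n0 where n0: "measure (Nm \<nu>) {x. real n0 \<le> f x} < 1/2"
    by (auto simp: eventually_sequentially)
  have bdd: "bdd_above S"
  proof (rule bdd_aboveI)
    fix t assume "t \<in> S"
    then have "1/2 \<le> meas \<nu> {x. t \<le> f x}" by (simp add: S_def)
    show "t \<le> real n0"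
    proof (rule ccontr)
      assume "\<not> t \<le> real n0"
      then have "meas \<nu> {x. t \<le> f x} \<le> meas \<nu> {x. real n0 \<le> f x}" by (intro mono) simp
      with n0 \<open>1/2 \<le> meas \<nu> {x. t \<le> f x}\<close> show False by (simp add: mN)
    qed
  qed
  define m where "m = Sup S"
  have notS: "meas \<nu> {x. m + t \<le> f x} < 1/2" if "t > 0" for t
  proof -
    have "m + t \<notin> S"
    proof
      assume "m + t \<in> S"
      then have "m + t \<le> m" unfolding m_def by (rule cSup_upper[OF _ bdd])
      with that show False by simp
    qed
    then show ?thesis by (simp add: S_def)
  qed
  have inS: "\<exists>s\<in>S. m - t < s" if "t > 0" for t
    using less_cSup_iff[of S "m - t"] Sne bdd that unfolding m_def by auto
  have P1: "meas \<nu> {x. m \<le> f x} \<ge> 1/2"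
  proof -
    define A where "A n = {x. m - 1 / (real n + 1) \<le> f x}" for n
    have "(\<lambda>n. measure (Nm \<nu>) (A n)) \<longlonglongrightarrow> measure (Nm \<nu>) (\<Inter>n. A n)"
    proof (intro N.finite_Lim_measure_decseq)
      show "decseq A" unfolding decseq_def A_def
      proof (intro allI impI subsetI)
        fix i j :: nat and x assume ij: "i \<le> j" and x: "x \<in> {x. m - 1 / (real j + 1) \<le> f x}"
        have "1 / (real j + 1) \<le> 1 / (real i + 1)" using ij by (intro divide_left_mono) auto
        with x show "x \<in> {x. m - 1 / (real i + 1) \<le> f x}" by auto
      qed
    qed auto
    moreover have "(\<Inter>n. A n) = {x. m \<le> f x}"
    proof (intro equalityI subsetI)
      fix x assume x: "x \<in> (\<Inter>n. A n)"
      show "x \<in> {x. m \<le> f x}"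
      proof (rule ccontr)
        assume "x \<notin> {x. m \<le> f x}"
        then have "0 < m - f x" by simp
        then obtain n where "inverse (real (Suc n)) < m - f x" using reals_Archimedean by blast
        then have "1 / (real n + 1) < m - f x" by (simp add: inverse_eq_divide add.commute)
        moreover have "m - 1 / (real n + 1) \<le> f x" using x by (auto simp: A_def)
        ultimately show False by linarith
      qed
    next
      fix x assume "x \<in> {x. m \<le> f x}"
      then show "x \<in> (\<Inter>n. A n)" by (auto simp: A_def intro: order_trans[of _ m] )
    qed
    ultimately have lim: "(\<lambda>n. measure (Nm \<nu>) (A n)) \<longlonglongrightarrow> meas \<nu> {x. m \<le> f x}" by (simp add: mN)
    have "1/2 \<le> measure (Nm \<nu>) (A n)" for n
    proof -
      obtain s where s: "s \<in> S" "m - 1 / (real n + 1) < s" using inS[of "1 / (real n + 1)"] by auto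
      have "1/2 \<le> meas \<nu> {x. s \<le> f x}" using s by (simp add: S_def)
      also have "\<dots> \<le> meas \<nu> (A n)" unfolding A_def using s by (intro mono) simp
      finally show ?thesis by (simp add: mN)
    qed
    then show ?thesis using lim by (intro LIMSEQ_le_const[OF lim]) auto
  qed
  have P2: "meas \<nu> {x. f x \<le> m} \<ge> 1/2"
  proof -
    define A where "A n = {x. f x < m + 1 / (real n + 1)}" for n
    have "(\<lambda>n. measure (Nm \<nu>) (A n)) \<longlonglongrightarrow> measure (Nm \<nu>) (\<Inter>n. A n)"
    proof (intro N.finite_Lim_measure_decseq)
      show "decseq A" unfolding decseq_def A_def
      proof (intro allI impI subsetI)
        fix i j :: nat and x assume ij: "i \<le> j" and x: "x \<in> {x. f x < m + 1 / (real j + 1)}"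
        have "1 / (real j + 1) \<le> 1 / (real i + 1)" using ij by (intro divide_left_mono) auto
        with x show "x \<in> {x. f x < m + 1 / (real i + 1)}" by auto
      qed
    qed auto
    moreover have "(\<Inter>n. A n) = {x. f x \<le> m}"
    proof (intro equalityI subsetI)
      fix x assume x: "x \<in> (\<Inter>n. A n)"
      show "x \<in> {x. f x \<le> m}"
      proof (rule ccontr)
        assume "x \<notin> {x. f x \<le> m}"
        then have "0 < f x - m" by simp
        then obtain n where "inverse (real (Suc n)) < f x - m" using reals_Archimedean by blast
        then have "1 / (real n + 1) < f x - m" by (simp add: inverse_eq_divide add.commute)
        moreover have "f x < m + 1 / (real n + 1)" using x by (auto simp: A_def)
        ultimately show False by linarith
      qed
    next
      fix x assume "x \<in> {x. f x \<le> m}"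
      moreover have "0 < 1 / (real n + 1)" for n by simp
      ultimately show "x \<in> (\<Inter>n. A n)" by (auto simp: A_def intro: order_le_less_trans add_strict_left_mono)
    qed
    ultimately have lim: "(\<lambda>n. measure (Nm \<nu>) (A n)) \<longlonglongrightarrow> meas \<nu> {x. f x \<le> m}" by (simp add: mN)
    have "1/2 \<le> measure (Nm \<nu>) (A n)" for n
    proof -
      have "A n = space (Nm \<nu>) - {x. m + 1 / (real n + 1) \<le> f x}" by (auto simp: A_def)
      then have "measure (Nm \<nu>) (A n) = 1 - meas \<nu> {x. m + 1 / (real n + 1) \<le> f x}"
        using N.finite_measure_compl[of "{x. m + 1 / (real n + 1) \<le> f x}"] m1 by (simp add: mN)
      moreover have "meas \<nu> {x. m + 1 / (real n + 1) \<le> f x} < 1/2" by (intro notS) simp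
      ultimately show ?thesis by simp
    qed
    then show ?thesis using lim by (intro LIMSEQ_le_const[OF lim]) auto
  qed
  have P4: "meas \<nu> {x. f x \<le> m - t} \<le> 1/2" if t0: "t > 0" for t
  proof -
    obtain s where s: "s \<in> S" "m - t < s" using inS[OF t0] by auto
    have "1/2 \<le> meas \<nu> {x. s \<le> f x}" using s by (simp add: S_def)
    moreover have "measure (Nm \<nu>) ({x. f x \<le> m - t} \<union> {x. s \<le> f x})
        = measure (Nm \<nu>) {x. f x \<le> m - t} + measure (Nm \<nu>) {x. s \<le> f x}"
      using s by (intro N.finite_measure_Union) auto
    moreover have "measure (Nm \<nu>) ({x. f x \<le> m - t} \<union> {x. s \<le> f x}) \<le> 1"
      using N.finite_measure_mono[of _ UNIV] m1 by simp
    ultimately show ?thesis by (simp add: mN)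
  qed
  show ?thesis using P1 P2 P4 notS by (intro exI[of _ m]) (auto intro: less_imp_le)
qed



lemma variance_le:
  fixes \<nu> f :: "'a \<Rightarrow> real"
  assumes nu: "prob_fun \<nu>"
  shows "variance \<nu> f \<le> (\<Sum>\<^sub>\<infinity>x. ennreal (\<nu> x * (f x - c)\<^sup>2))"
proof (cases "(\<Sum>\<^sub>\<infinity>x. ennreal (\<nu> x * (f x - c)\<^sup>2)) = \<infinity>")
  case True then show ?thesis by simp
next
  case False
  note nf = nu_facts[OF nu]
  have s1: "(\<lambda>x. \<nu> x * (f x - c)\<^sup>2) summable_on UNIV"
    by (rule summable_of_ennreal_finite) (use False nf(1) in \<open>auto simp: top.not_eq_extremum\<close>)
  define S where "S = (\<Sum>\<^sub>\<infinity>x. \<nu> x * (f x - c)\<^sup>2)"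
  have hS: "((\<lambda>x. \<nu> x * (f x - c)\<^sup>2) has_sum S) UNIV" using s1 by (simp add: S_def)
  have s2: "(\<lambda>x. \<nu> x * (f x)\<^sup>2) summable_on UNIV"
  proof (rule summable_on_comparison_test)
    show "(\<lambda>x. 2 * (\<nu> x * (f x - c)\<^sup>2) + (2 * c\<^sup>2) * \<nu> x) summable_on UNIV"
      by (intro summable_on_add summable_on_cmult_right s1 nf(3))
    fix x
    have "(f x)\<^sup>2 \<le> 2 * (f x - c)\<^sup>2 + 2 * c\<^sup>2" using sq_sum_le[of "f x - c" c] by simp
    then have "\<nu> x * (f x)\<^sup>2 \<le> \<nu> x * (2 * (f x - c)\<^sup>2 + 2 * c\<^sup>2)" by (rule mult_left_mono) (rule nf(1))
    then show "\<nu> x * (f x)\<^sup>2 \<le> 2 * (\<nu> x * (f x - c)\<^sup>2) + (2 * c\<^sup>2) * \<nu> x" by (simp add: algebra_simps)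
    show "0 \<le> \<nu> x * (f x)\<^sup>2" using nf(1) by simp
  qed
  have s3: "(\<lambda>x. \<nu> x * f x) summable_on UNIV"
  proof -
    have "(\<lambda>x. norm (\<nu> x * f x)) summable_on UNIV"
    proof (rule Infinite_Sum.abs_summable_on_comparison_test')
      show "(\<lambda>x. \<nu> x + \<nu> x * (f x)\<^sup>2) summable_on UNIV" by (intro summable_on_add nf(3) s2)
      fix x
      have "\<bar>f x\<bar> \<le> 1 + (f x)\<^sup>2"
      proof (cases "\<bar>f x\<bar> \<le> 1")
        case True then show ?thesis by (smt (verit) zero_le_power2)
      next
        case False
        then have "\<bar>f x\<bar> * 1 \<le> \<bar>f x\<bar> * \<bar>f x\<bar>" by (intro mult_left_mono) auto
        then show ?thesis by (simp add: power2_eq_square abs_mult_self_eq)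
      qed
      then have "\<nu> x * \<bar>f x\<bar> \<le> \<nu> x * (1 + (f x)\<^sup>2)" by (rule mult_left_mono) (rule nf(1))
      then show "norm (\<nu> x * f x) \<le> \<nu> x + \<nu> x * (f x)\<^sup>2"
        using nf(1)[of x] by (simp add: abs_mult algebra_simps)
    qed
    then show ?thesis using summable_on_iff_abs_summable_on_real by blast
  qed
  define M where "M = mean \<nu> f"
  have hM: "((\<lambda>x. \<nu> x * f x) has_sum M) UNIV" using s3 by (simp add: M_def mean_def)
  have A: "((\<lambda>x. \<nu> x * (f x - c)\<^sup>2 + (-2*(M-c)) * (\<nu> x * f x) + (2*(M-c)*c + (M-c)\<^sup>2) * \<nu> x)
      has_sum (S + (-2*(M-c)) * M + (2*(M-c)*c + (M-c)\<^sup>2) * 1)) UNIV"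
    by (intro has_sum_add has_sum_cmult_right hS hM nf(2))
  have eqf: "(\<lambda>x. \<nu> x * (f x - c)\<^sup>2 + (-2*(M-c)) * (\<nu> x * f x) + (2*(M-c)*c + (M-c)\<^sup>2) * \<nu> x)
      = (\<lambda>x. \<nu> x * (f x - M)\<^sup>2)"
    by (rule ext) (simp add: power2_eq_square algebra_simps)
  have eqv: "S + (-2*(M-c)) * M + (2*(M-c)*c + (M-c)\<^sup>2) * 1 = S - (M - c)\<^sup>2"
    by (simp add: power2_eq_square algebra_simps)
  from A have hV: "((\<lambda>x. \<nu> x * (f x - M)\<^sup>2) has_sum (S - (M - c)\<^sup>2)) UNIV"
    by (simp only: eqf eqv)
  have "variance \<nu> f = (\<Sum>\<^sub>\<infinity>x. ennreal (\<nu> x * (f x - M)\<^sup>2))" by (simp add: variance_def M_def)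
  also have "\<dots> = ennreal (\<Sum>\<^sub>\<infinity>x. \<nu> x * (f x - M)\<^sup>2)"
    using hV nf(1) by (intro ennreal_infsum) (auto simp: has_sum_imp_summable)
  also have "\<dots> = ennreal (S - (M - c)\<^sup>2)" using hV by (simp add: infsumI)
  also have "\<dots> \<le> ennreal S" by (intro ennreal_leI) simp
  also have "\<dots> = (\<Sum>\<^sub>\<infinity>x. ennreal (\<nu> x * (f x - c)\<^sup>2))"
    unfolding S_def using s1 nf(1) by (intro ennreal_infsum[symmetric]) auto
  finally show ?thesis .
qed

lemma pos_neg_sq:
  fixes u v :: real
  shows "(max 0 u - max 0 v)\<^sup>2 + (max 0 (-u) - max 0 (-v))\<^sup>2 \<le> (u - v)\<^sup>2"
proof (cases "u \<ge> 0")
  case True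
  show ?thesis
  proof (cases "v \<ge> 0")
    case True with \<open>u \<ge> 0\<close> show ?thesis by simp
  next
    case False
    then have "0 \<le> - (u * v)" using True by (simp add: mult_nonneg_nonpos)
    then show ?thesis using True False by (simp add: power2_eq_square algebra_simps)
  qed
next
  case False
  show ?thesis
  proof (cases "v \<ge> 0")
    case True
    then have "0 \<le> - (u * v)" using False by (simp add: mult_nonpos_nonneg)
    then show ?thesis using True False by (simp add: power2_eq_square algebra_simps)
  next
    case False
    with \<open>\<not> u \<ge> 0\<close> show ?thesis by (simp add: power2_eq_square algebra_simps)
  qed
qed

lemma dirichlet_split:
  assumes ms: "markov_setting p \<mu>"
  shows "dirichlet p \<mu> (\<lambda>x. max 0 (f x - m)) + dirichlet p \<mu> (\<lambda>x. max 0 (m - f x)) \<le> dirichlet p \<mu> f"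
proof -
  note fa = ms_facts[OF ms]
  have pt: "ennreal (\<mu> x * p x y * (max 0 (f x - m) - max 0 (f y - m))\<^sup>2)
        + ennreal (\<mu> x * p x y * (max 0 (m - f x) - max 0 (m - f y))\<^sup>2)
      \<le> ennreal (\<mu> x * p x y * (f x - f y)\<^sup>2)" for x y
  proof -
    have m0: "0 \<le> \<mu> x * p x y" using fa(1,2) by simp
    have "(max 0 (f x - m) - max 0 (f y - m))\<^sup>2 + (max 0 (m - f x) - max 0 (m - f y))\<^sup>2 \<le> (f x - f y)\<^sup>2"
      using pos_neg_sq[of "f x - m" "f y - m"] by simp
    then have "\<mu> x * p x y * (max 0 (f x - m) - max 0 (f y - m))\<^sup>2 + \<mu> x * p x y * (max 0 (m - f x) - max 0 (m - f y))\<^sup>2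
        \<le> \<mu> x * p x y * (f x - f y)\<^sup>2"
      using m0 by (simp add: distrib_left[symmetric] mult_left_mono)
    then show ?thesis using m0 by (simp add: ennreal_plus[symmetric] del: ennreal_plus)
  qed
  have "dirichlet p \<mu> (\<lambda>x. max 0 (f x - m)) + dirichlet p \<mu> (\<lambda>x. max 0 (m - f x))
      = (1/2) * ((\<Sum>\<^sub>\<infinity>(x, y)\<in>UNIV. ennreal (\<mu> x * p x y * (max 0 (f x - m) - max 0 (f y - m))\<^sup>2))
          + (\<Sum>\<^sub>\<infinity>(x, y)\<in>UNIV. ennreal (\<mu> x * p x y * (max 0 (m - f x) - max 0 (m - f y))\<^sup>2)))"
    unfolding dirichlet_def by (simp add: distrib_left)
  also have "\<dots> = (1/2) * (\<Sum>\<^sub>\<infinity>(x, y)\<in>UNIV. ennreal (\<mu> x * p x y * (max 0 (f x - m) - max 0 (f y - m))\<^sup>2)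
        + ennreal (\<mu> x * p x y * (max 0 (m - f x) - max 0 (m - f y))\<^sup>2))"
    by (subst infsum_add[symmetric]) (auto intro: nonneg_summable_on_complete simp: case_prod_beta')
  also have "\<dots> \<le> dirichlet p \<mu> f"
    unfolding dirichlet_def
    by (intro mult_left_mono infsum_mono nonneg_summable_on_complete) (auto simp: pt)
  finally show ?thesis .
qed

lemma dir1:
  fixes p :: "'a::countable \<Rightarrow> 'a \<Rightarrow> real" and \<mu> \<nu> :: "'a \<Rightarrow> real"
  assumes ms: "markov_setting p \<mu>" and nu: "prob_fun \<nu>" and vc: "var_cond p \<mu> \<nu> C"
  shows "PI_cond p \<mu> \<nu> (4 * C)"
  unfolding PI_cond_def
proof (intro allI impI)
  fix f :: "'a \<Rightarrow> real"
  obtain m where m: "meas \<nu> {x. f x \<le> m} \<ge> 1/2" "meas \<nu> {x. m \<le> f x} \<ge> 1/2"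
     "\<And>t. t > 0 \<Longrightarrow> meas \<nu> {x. m + t \<le> f x} \<le> 1/2" "\<And>t. t > 0 \<Longrightarrow> meas \<nu> {x. f x \<le> m - t} \<le> 1/2"
    using median_exists[OF nu, of f] by blast
  define \<phi> where "\<phi> x = max 0 (f x - m)" for x
  define \<psi> where "\<psi> x = max 0 (m - f x)" for x
  have c1: "(\<Sum>\<^sub>\<infinity>x. ennreal (\<nu> x * (\<phi> x)\<^sup>2)) \<le> 4 * C * dirichlet p \<mu> \<phi>"
  proof (rule core[OF ms nu vc])
    show "0 \<le> \<phi> x" for x by (simp add: \<phi>_def)
    have "{x. \<phi> x = 0} = {x. f x \<le> m}" by (auto simp: \<phi>_def max_def)
    then show "meas \<nu> {x. \<phi> x = 0} \<ge> 1/2" using m(1) by simp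
    fix t :: real assume t: "t > 0"
    then have "{x. t \<le> \<phi> x} = {x. m + t \<le> f x}" by (auto simp: \<phi>_def max_def)
    then show "meas \<nu> {x. t \<le> \<phi> x} \<le> 1/2" using m(3)[OF t] by simp
  qed
  have c2: "(\<Sum>\<^sub>\<infinity>x. ennreal (\<nu> x * (\<psi> x)\<^sup>2)) \<le> 4 * C * dirichlet p \<mu> \<psi>"
  proof (rule core[OF ms nu vc])
    show "0 \<le> \<psi> x" for x by (simp add: \<psi>_def)
    have "{x. \<psi> x = 0} = {x. m \<le> f x}" by (auto simp: \<psi>_def max_def)
    then show "meas \<nu> {x. \<psi> x = 0} \<ge> 1/2" using m(2) by simp
    fix t :: real assume t: "t > 0"
    then have "{x. t \<le> \<psi> x} = {x. f x \<le> m - t}" by (auto simp: \<psi>_def max_def)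
    then show "meas \<nu> {x. t \<le> \<psi> x} \<le> 1/2" using m(4)[OF t] by simp
  qed
  have "variance \<nu> f \<le> (\<Sum>\<^sub>\<infinity>x. ennreal (\<nu> x * (f x - m)\<^sup>2))" by (rule variance_le[OF nu])
  also have "\<dots> = (\<Sum>\<^sub>\<infinity>x. ennreal (\<nu> x * (\<phi> x)\<^sup>2) + ennreal (\<nu> x * (\<psi> x)\<^sup>2))"
  proof (rule infsum_cong)
    fix x
    have "(f x - m)\<^sup>2 = (\<phi> x)\<^sup>2 + (\<psi> x)\<^sup>2" by (simp add: \<phi>_def \<psi>_def max_def power2_eq_square algebra_simps)
    then show "ennreal (\<nu> x * (f x - m)\<^sup>2) = ennreal (\<nu> x * (\<phi> x)\<^sup>2) + ennreal (\<nu> x * (\<psi> x)\<^sup>2)"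
      using nu_facts(1)[OF nu, of x] by (simp add: ennreal_plus[symmetric] distrib_left del: ennreal_plus)
  qed
  also have "\<dots> = (\<Sum>\<^sub>\<infinity>x. ennreal (\<nu> x * (\<phi> x)\<^sup>2)) + (\<Sum>\<^sub>\<infinity>x. ennreal (\<nu> x * (\<psi> x)\<^sup>2))"
    by (rule infsum_add) (auto intro: nonneg_summable_on_complete)
  also have "\<dots> \<le> 4 * C * dirichlet p \<mu> \<phi> + 4 * C * dirichlet p \<mu> \<psi>"
    by (intro add_mono c1 c2)
  also have "\<dots> = 4 * C * (dirichlet p \<mu> \<phi> + dirichlet p \<mu> \<psi>)" by (simp add: distrib_left)
  also have "\<dots> \<le> 4 * C * dirichlet p \<mu> f"
    unfolding \<phi>_def \<psi>_def by (intro mult_left_mono dirichlet_split[OF ms]) auto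
  finally show "variance \<nu> f \<le> 4 * C * dirichlet p \<mu> f" .
qed



lemma clamp_lip: "\<bar>max 0 (min 1 a) - max 0 (min 1 b)\<bar> \<le> \<bar>a - (b::real)\<bar>"
  by (simp add: max_def min_def abs_if)

lemma var_lower:
  fixes \<nu> h :: "'a::countable \<Rightarrow> real"
  assumes nu: "prob_fun \<nu>" and AB: "A \<inter> B = {}" and mA: "meas \<nu> A \<le> 1/2" and mB: "meas \<nu> B \<ge> 1/2"
    and hA: "\<And>x. x \<in> A \<Longrightarrow> h x = 1" and hB: "\<And>x. x \<in> B \<Longrightarrow> h x = 0"
  shows "ennreal (meas \<nu> A / 2) \<le> variance \<nu> h"
proof -
  note nf = nu_facts[OF nu]
  define M where "M = mean \<nu> h"
  have "(\<Sum>\<^sub>\<infinity>x\<in>A. ennreal (\<nu> x * (h x - M)\<^sup>2)) = (\<Sum>\<^sub>\<infinity>x\<in>A. ennreal ((1 - M)\<^sup>2) * ennreal (\<nu> x))"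
    using nf(1) hA by (intro infsum_cong) (simp add: ennreal_mult'[symmetric] mult.commute)
  also have "\<dots> = ennreal ((1 - M)\<^sup>2) * ennreal (meas \<nu> A)"
    by (simp add: infsum_cmult_ennreal ennreal_meas[OF nu])
  finally have sA: "(\<Sum>\<^sub>\<infinity>x\<in>A. ennreal (\<nu> x * (h x - M)\<^sup>2)) = ennreal ((1 - M)\<^sup>2 * meas \<nu> A)"
    using meas_nonneg[OF nu, of A] by (simp add: ennreal_mult)
  have "(\<Sum>\<^sub>\<infinity>x\<in>B. ennreal (\<nu> x * (h x - M)\<^sup>2)) = (\<Sum>\<^sub>\<infinity>x\<in>B. ennreal (M\<^sup>2) * ennreal (\<nu> x))"
    using nf(1) hB by (intro infsum_cong) (simp add: ennreal_mult'[symmetric] mult.commute)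
  also have "\<dots> = ennreal (M\<^sup>2) * ennreal (meas \<nu> B)"
    by (simp add: infsum_cmult_ennreal ennreal_meas[OF nu])
  finally have sB: "(\<Sum>\<^sub>\<infinity>x\<in>B. ennreal (\<nu> x * (h x - M)\<^sup>2)) = ennreal (M\<^sup>2 * meas \<nu> B)"
    using meas_nonneg[OF nu, of B] by (simp add: ennreal_mult)
  have m0: "0 \<le> meas \<nu> A" "0 \<le> meas \<nu> B" using meas_nonneg[OF nu] by auto
  have real_ineq: "meas \<nu> A / 2 \<le> (1 - M)\<^sup>2 * meas \<nu> A + M\<^sup>2 * meas \<nu> B"
  proof -
    have "M\<^sup>2 * meas \<nu> A \<le> M\<^sup>2 * meas \<nu> B" using mA mB by (intro mult_left_mono) auto
    moreover have "meas \<nu> A / 2 \<le> ((1 - M)\<^sup>2 + M\<^sup>2) * meas \<nu> A"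
    proof -
      have "1/2 \<le> (1 - M)\<^sup>2 + M\<^sup>2"
      proof -
        have "0 \<le> 2 * (M - 1/2)\<^sup>2" by simp
        then show ?thesis by (simp add: power2_eq_square algebra_simps)
      qed
      then have "1/2 * meas \<nu> A \<le> ((1 - M)\<^sup>2 + M\<^sup>2) * meas \<nu> A" using m0 by (intro mult_right_mono) auto
      then show ?thesis by simp
    qed
    ultimately show ?thesis by (simp add: algebra_simps)
  qed
  have "ennreal (meas \<nu> A / 2) \<le> ennreal ((1 - M)\<^sup>2 * meas \<nu> A + M\<^sup>2 * meas \<nu> B)"
    by (rule ennreal_leI[OF real_ineq])
  also have "\<dots> = (\<Sum>\<^sub>\<infinity>x\<in>A. ennreal (\<nu> x * (h x - M)\<^sup>2)) + (\<Sum>\<^sub>\<infinity>x\<in>B. ennreal (\<nu> x * (h x - M)\<^sup>2))"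
    using m0 by (simp add: sA sB ennreal_plus)
  also have "\<dots> = (\<Sum>\<^sub>\<infinity>x\<in>A \<union> B. ennreal (\<nu> x * (h x - M)\<^sup>2))"
    by (rule infsum_Un_disjoint[symmetric]) (use AB in \<open>auto intro: nonneg_summable_on_complete\<close>)
  also have "\<dots> \<le> (\<Sum>\<^sub>\<infinity>x. ennreal (\<nu> x * (h x - M)\<^sup>2))"
    by (rule infsum_mono_neutral) (auto intro: nonneg_summable_on_complete)
  also have "\<dots> = variance \<nu> h" by (simp add: variance_def M_def)
  finally show ?thesis .
qed

lemma bound_g:
  fixes p :: "'a::countable \<Rightarrow> 'a \<Rightarrow> real" and \<mu> \<nu> :: "'a \<Rightarrow> real"
  assumes ms: "markov_setting p \<mu>" and nu: "prob_fun \<nu>" and pi: "PI_cond p \<mu> \<nu> C"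
    and AB: "A \<inter> B = {}" and mA: "meas \<nu> A \<le> 1/2" and mB: "meas \<nu> B \<ge> 1/2"
    and gA: "\<And>x. x \<in> A \<Longrightarrow> g x = 1" and gB: "\<And>x. x \<in> B \<Longrightarrow> g x = 0"
  shows "ennreal (meas \<nu> A) \<le> 2 * C * dirichlet p \<mu> g"
proof -
  note fa = ms_facts[OF ms]
  define h where "h x = max 0 (min 1 (g x))" for x
  have l2h: "l2 \<mu> h"
    unfolding l2_def
  proof (rule summable_on_comparison_test)
    have "\<mu> summable_on UNIV" using fa(3) by (auto simp: summable_on_def)
    then show "\<mu> summable_on UNIV" .
    fix x
    have "(h x)\<^sup>2 \<le> 1" unfolding h_def by (auto simp: max_def min_def power_le_one abs_square_le_1)
    then show "\<mu> x * (h x)\<^sup>2 \<le> \<mu> x" using fa(2)[of x] mult_left_mono[of "(h x)\<^sup>2" 1 "\<mu> x"] by simp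
    show "0 \<le> \<mu> x * (h x)\<^sup>2" using fa(2)[of x] by simp
  qed
  have dh: "dirichlet p \<mu> h \<le> dirichlet p \<mu> g"
    unfolding dirichlet_def
  proof (intro mult_left_mono infsum_mono nonneg_summable_on_complete)
    fix e :: "'a \<times> 'a"
    obtain x y where e: "e = (x, y)" by fastforce
    have "(h x - h y)\<^sup>2 \<le> (g x - g y)\<^sup>2"
      using clamp_lip[of "g x" "g y"] unfolding h_def
      by (metis abs_le_square_iff)
    then have "\<mu> x * p x y * (h x - h y)\<^sup>2 \<le> \<mu> x * p x y * (g x - g y)\<^sup>2"
      using fa(1,2) by (intro mult_left_mono) auto
    then show "(case e of (x, y) \<Rightarrow> ennreal (\<mu> x * p x y * (h x - h y)\<^sup>2))
        \<le> (case e of (x, y) \<Rightarrow> ennreal (\<mu> x * p x y * (g x - g y)\<^sup>2))"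
      unfolding e by (simp add: ennreal_leI)
  qed auto
  have "ennreal (meas \<nu> A / 2) \<le> variance \<nu> h"
    by (rule var_lower[OF nu AB mA mB]) (auto simp: h_def gA gB)
  also have "\<dots> \<le> C * dirichlet p \<mu> h" using pi l2h by (simp add: PI_cond_def)
  also have "\<dots> \<le> C * dirichlet p \<mu> g" by (intro mult_left_mono dh) simp
  finally have "ennreal (meas \<nu> A / 2) \<le> C * dirichlet p \<mu> g" .
  then have "2 * ennreal (meas \<nu> A / 2) \<le> 2 * (C * dirichlet p \<mu> g)" by (intro mult_left_mono) auto
  moreover have "2 * ennreal (meas \<nu> A / 2) = ennreal (meas \<nu> A)"
    using meas_nonneg[OF nu, of A] ennreal_mult[of 2 "meas \<nu> A / 2"] by simp
  ultimately show ?thesis by (simp add: mult.assoc)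
qed

lemma dir2:
  fixes p :: "'a::countable \<Rightarrow> 'a \<Rightarrow> real" and \<mu> \<nu> :: "'a \<Rightarrow> real"
  assumes ms: "markov_setting p \<mu>" and nu: "prob_fun \<nu>" and pi: "PI_cond p \<mu> \<nu> C"
  shows "var_cond p \<mu> \<nu> (2 * C)"
  unfolding var_cond_def
proof (intro allI impI)
  fix A B :: "'a set"
  assume AB: "A \<inter> B = {}" and mA: "meas \<nu> A \<le> 1/2" and mB: "1/2 \<le> meas \<nu> B"
  define G where "G = {g :: 'a \<Rightarrow> real. (\<forall>x\<in>A. g x = 1) \<and> (\<forall>x\<in>B. g x = 0)}"
  have capdef: "cap p \<mu> A B = (INF g\<in>G. dirichlet p \<mu> g)" by (simp add: cap_def G_def)
  have K: "ennreal (meas \<nu> A) \<le> 2 * C * dirichlet p \<mu> g" if "g \<in> G" for g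
    using that by (intro bound_g[OF ms nu pi AB mA mB]) (auto simp: G_def)
  define g0 where "g0 x = (if x \<in> A then 1 else 0 :: real)" for x
  have g0: "g0 \<in> G" using AB by (auto simp: G_def g0_def)
  show "ennreal (meas \<nu> A) \<le> 2 * C * cap p \<mu> A B"
  proof (cases "C = \<infinity>")
    case True
    show ?thesis
    proof (cases "A = {}")
      case True then show ?thesis by (simp add: meas_def)
    next
      case False
      then obtain x where x: "x \<in> A" by auto
      have "B \<noteq> {}" using mB by (auto simp: meas_def)
      then obtain y where y: "y \<in> B" by auto
      obtain c where c: "c > 0" "\<And>g. ennreal (c * (g x - g y)\<^sup>2) \<le> dirichlet p \<mu> g"
        using path_bound[OF ms, of x y] by auto
      have "ennreal c \<le> cap p \<mu> A B"
        unfolding capdef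
      proof (rule INF_greatest)
        fix g assume "g \<in> G"
        then have "g x = 1" "g y = 0" using x y by (auto simp: G_def)
        then show "ennreal c \<le> dirichlet p \<mu> g" using c(2)[of g] by simp
      qed
      then have "cap p \<mu> A B \<noteq> 0" using c(1) by (auto simp: ennreal_eq_0_iff)
      then have "2 * C * cap p \<mu> A B = \<infinity>" using True by (simp add: ennreal_mult_eq_top_iff)
      then show ?thesis by simp
    qed
  next
    case Cfin: False
    show ?thesis
    proof (cases "C = 0")
      case True
      then have "ennreal (meas \<nu> A) \<le> 0" using K[OF g0] by simp
      then show ?thesis by simp
    next
      case False
      define c where "c = 2 * C"
      have "c \<noteq> 0" using False by (simp add: c_def)
      then have c0: "c > 0" "c \<noteq> \<infinity>" using Cfin by (auto simp: c_def ennreal_mult_eq_top_iff zero_less_iff_neq_zero)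
      have "ennreal (meas \<nu> A) / c \<le> cap p \<mu> A B"
        unfolding capdef
      proof (rule INF_greatest)
        fix g assume "g \<in> G"
        then show "ennreal (meas \<nu> A) / c \<le> dirichlet p \<mu> g"
          using K c0 by (intro divide_le_posI_ennreal) (auto simp: c_def)
      qed
      then have "ennreal (meas \<nu> A) / c * c \<le> cap p \<mu> A B * c" by (rule mult_right_mono) simp
      moreover have "ennreal (meas \<nu> A) / c * c = ennreal (meas \<nu> A)"
        using c0 by (simp add: ennreal_divide_times ennreal_divide_self top.not_eq_extremum)
      ultimately show ?thesis by (simp add: c_def mult.commute)
    qed
  qed
qed



theorem mainTheorem10:
  fixes p :: "'a::countable \<Rightarrow> 'a \<Rightarrow> real" and \<mu> \<nu> :: "'a \<Rightarrow> real"
  assumes "markov_setting p \<mu>"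
    and "prob_fun \<nu>"
  shows "(\<forall>C. var_cond p \<mu> \<nu> C \<longrightarrow> PI_cond p \<mu> \<nu> (4 * C))
       \<and> (\<forall>C. PI_cond p \<mu> \<nu> C \<longrightarrow> var_cond p \<mu> \<nu> (2 * C))
       \<and> (let Cvar = Inf {C. var_cond p \<mu> \<nu> C}; CPI = Inf {C. PI_cond p \<mu> \<nu> C}
          in Cvar / 2 \<le> CPI \<and> CPI \<le> 4 * Cvar)"
proof -
  have c1: "\<forall>C. var_cond p \<mu> \<nu> C \<longrightarrow> PI_cond p \<mu> \<nu> (4 * C)" using dir1[OF assms] by blast
  have c2: "\<forall>C. PI_cond p \<mu> \<nu> C \<longrightarrow> var_cond p \<mu> \<nu> (2 * C)" using dir2[OF assms] by blast
  define Cv where "Cv = Inf {C. var_cond p \<mu> \<nu> C}"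
  define CP where "CP = Inf {C. PI_cond p \<mu> \<nu> C}"
  have i1: "CP \<le> 4 * Cv"
  proof -
    have "CP / 4 \<le> Cv" unfolding Cv_def
    proof (rule Inf_greatest)
      fix C assume "C \<in> {C. var_cond p \<mu> \<nu> C}"
      then have "CP \<le> 4 * C" unfolding CP_def using c1 by (auto intro: Inf_lower)
      then show "CP / 4 \<le> C" by (intro divide_le_posI_ennreal) auto
    qed
    then have "CP / 4 * 4 \<le> Cv * 4" by (rule mult_right_mono) simp
    moreover have "CP / 4 * 4 = CP" by (simp add: ennreal_divide_times)
    ultimately show ?thesis by (simp add: mult.commute)
  qed
  have i2: "Cv / 2 \<le> CP" unfolding CP_def
  proof (rule Inf_greatest)
    fix C assume "C \<in> {C. PI_cond p \<mu> \<nu> C}"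
    then have "Cv \<le> 2 * C" unfolding Cv_def using c2 by (auto intro: Inf_lower)
    then show "Cv / 2 \<le> C" by (intro divide_le_posI_ennreal) auto
  qed
  show ?thesis using c1 c2 i1 i2 by (simp add: Let_def Cv_def CP_def)
qed


end
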